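(* In the hyperbolic plane let $l=(MN)$ be a line (the axis) with terminals $M,N$ at infinity. Let $(AB)$ and $(CD)$ be two lines lying in different half-planes bounded by $l$, with terminals $A,B,C,D$ at infinity, such that $M,N,A,B$ are four consecutive points on the circle at infinity and $M,N,D,C$ are four consecutive points on it. Put $\theta_1=\theta(A,B)$, $\theta_2=\theta(D,C)$, $\theta_{12}=\theta(B,C)$. Let $\delta_1,\delta_2$ be vectors with $\delta_1^2=\delta_2^2=-2$ orthogonal to $(AB)$ and $(CD)$ respectively such that $l$ is contained in both $\mathcal H^+_{\delta_1}$ and $\mathcal H^+_{\delta_2}$. Then $$(\delta_1,\delta_2)=2\,\mathrm{ch}\,\rho=4\frac{\mathrm{ch}\frac{\theta_1+\theta_{12}}{2}\,\mathrm{ch}\frac{\theta_2-\theta_{12}}{2}}{\mathrm{sh}\frac{\theta_1}{2}\,\mathrm{sh}\frac{\theta_2}{2}}-2,$$ where $\rho$ is the distance between the lines $(AB)$ and $(CD)$.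
   Context: Let $V$ be a $3$-dimensional real vector space with a symmetric bilinear form of signature $(1,2)$; the hyperbolic plane is $\mathcal L=V^+/\mathbb R_{>0}$ ($V^+$ a component of $\{x^2>0\}$), curvature $-1$. Points at infinity are isotropic rays in the closure of $V^+$; they form a circle identified with the real projective line, with cross-ratio $[P,Q,R,S]=\frac{(t_R-t_P)(t_S-t_Q)}{(t_R-t_Q)(t_S-t_P)}$ in a projective coordinate $t$. For $\delta$ with $\delta^2<0$, $\mathcal H^+_\delta=\{\mathbb R_{>0}x:(x,\delta)\ge0\}$. For points $A,B$ at infinity in the same half-plane bounded by the axis $l=(MN)$, $\theta(A,B)=\ln[M,N,A,B]$. For a point $X$ at infinity not on $l$ let $X'$ be the other terminal of the line through $X$ orthogonal to $l$; for $A,B$ in different half-planes bounded by $l$, $\theta(A,B)=\theta(A,B')$. *)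

theory Defs
  imports "HOL-Analysis.Analysis"
begin

text \<open>Model: V = R^3 with the symmetric bilinear form of signature (1,2)
  (x,y) = x1 y1 - x2 y2 - x3 y3.  V+ is the component of {x^2 > 0} with x1 > 0.\<close>

definition mink :: "real^3 \<Rightarrow> real^3 \<Rightarrow> real" where
  "mink x y = x$1 * y$1 - x$2 * y$2 - x$3 * y$3"

definition Vplus :: "(real^3) set" where
  "Vplus = {x. mink x x > 0 \<and> x$1 > 0}"

text \<open>A point at infinity is an isotropic ray in the closure of V+; it is
  represented by any nonzero vector on it.\<close>
definition at_inf :: "real^3 \<Rightarrow> bool" where
  "at_inf v \<longleftrightarrow> mink v v = 0 \<and> v$1 > 0"

text \<open>The (cone over the) line with terminals P, Q at infinity:
  the points of L on the geodesic (PQ) are the rays of s P + u Q, s,u > 0.\<close>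
definition line_pts :: "real^3 \<Rightarrow> real^3 \<Rightarrow> (real^3) set" where
  "line_pts P Q = {s *\<^sub>R P + u *\<^sub>R Q | s u. s > 0 \<and> u > 0}"

definition Hplus :: "real^3 \<Rightarrow> (real^3) set" where
  "Hplus \<delta> = {x \<in> Vplus. mink x \<delta> \<ge> 0}"

text \<open>Angular position of a point at infinity on the circle at infinity
  (the ray of (1, cos phi, sin phi)).\<close>
definition ang :: "real^3 \<Rightarrow> real" where
  "ang X = Arg2pi (Complex (X$2) (X$3))"

text \<open>Projective coordinate: homogeneous coordinates (cos(phi/2), sin(phi/2)) of the
  coordinate t = tan(phi/2), i.e. of the rational parametrisation
  t \<mapsto> (1+t^2, 1-t^2, 2t) of the isotropic cone.  pdiff R P is the homogeneous
  form of t_R - t_P.\<close>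
definition pcoord :: "real^3 \<Rightarrow> real \<times> real" where
  "pcoord X = (cos (ang X / 2), sin (ang X / 2))"

definition pdiff :: "real^3 \<Rightarrow> real^3 \<Rightarrow> real" where
  "pdiff R P = fst (pcoord P) * snd (pcoord R) - snd (pcoord P) * fst (pcoord R)"

definition cross_ratio :: "real^3 \<Rightarrow> real^3 \<Rightarrow> real^3 \<Rightarrow> real^3 \<Rightarrow> real" where
  "cross_ratio P Q R S = (pdiff R P * pdiff S Q) / (pdiff R Q * pdiff S P)"

definition theta :: "real^3 \<Rightarrow> real^3 \<Rightarrow> real^3 \<Rightarrow> real^3 \<Rightarrow> real" where
  "theta M N A B = ln (cross_ratio M N A B)"

definition cpos :: "real^3 \<Rightarrow> real^3 \<Rightarrow> real" where
  "cpos P X = Arg2pi (Complex (X$2) (X$3) / Complex (P$2) (P$3))"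

text \<open>P, Q, R, S are four consecutive (distinct) points on the circle at infinity,
  in this cyclic order for one of the two orientations.\<close>
definition consecutive4 :: "real^3 \<Rightarrow> real^3 \<Rightarrow> real^3 \<Rightarrow> real^3 \<Rightarrow> bool" where
  "consecutive4 P Q R S \<longleftrightarrow>
     (0 < cpos P Q \<and> cpos P Q < cpos P R \<and> cpos P R < cpos P S) \<or>
     (0 < cpos P S \<and> cpos P S < cpos P R \<and> cpos P R < cpos P Q)"

text \<open>The lines (AB) and (CD) lie in different (open) half-planes bounded by (MN):
  the half-planes are the sets where (x, nu) > 0 resp. < 0 for a normal nu of (MN).\<close>
definition diff_half_planes :: "real^3 \<Rightarrow> real^3 \<Rightarrow> real^3 \<Rightarrow> real^3 \<Rightarrow> real^3 \<Rightarrow> real^3 \<Rightarrow> bool" where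
  "diff_half_planes M N A B C D \<longleftrightarrow>
     (\<exists>\<nu>. \<nu> \<noteq> 0 \<and> mink \<nu> M = 0 \<and> mink \<nu> N = 0 \<and>
          (\<forall>x \<in> line_pts A B. mink x \<nu> > 0) \<and> (\<forall>y \<in> line_pts C D. mink y \<nu> < 0))"

text \<open>Two lines are orthogonal iff their normal (polar) vectors are orthogonal.\<close>
definition lines_orth :: "real^3 \<Rightarrow> real^3 \<Rightarrow> real^3 \<Rightarrow> real^3 \<Rightarrow> bool" where
  "lines_orth P Q R S \<longleftrightarrow>
     (\<exists>n1 n2. n1 \<noteq> 0 \<and> n2 \<noteq> 0 \<and> mink n1 P = 0 \<and> mink n1 Q = 0 \<and>
        mink n2 R = 0 \<and> mink n2 S = 0 \<and> mink n1 n2 = 0)"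

text \<open>X' is the other terminal of the line through X orthogonal to (MN).\<close>
definition other_terminal :: "real^3 \<Rightarrow> real^3 \<Rightarrow> real^3 \<Rightarrow> real^3 \<Rightarrow> bool" where
  "other_terminal M N X X' \<longleftrightarrow>
     at_inf X' \<and> (\<forall>c. X' \<noteq> c *\<^sub>R X) \<and> lines_orth M N X X'"

definition hdist :: "real^3 \<Rightarrow> real^3 \<Rightarrow> real" where
  "hdist x y = arcosh (mink x y / sqrt (mink x x * mink y y))"

definition line_dist :: "real^3 \<Rightarrow> real^3 \<Rightarrow> real^3 \<Rightarrow> real^3 \<Rightarrow> real" where
  "line_dist A B C D = Inf {hdist x y | x y. x \<in> line_pts A B \<and> y \<in> line_pts C D}"

end

theory Submission imports Defs begin

definition dt :: "real \<Rightarrow> real \<Rightarrow> real \<Rightarrow> real \<Rightarrow> real" where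
  "dt a1 a2 b1 b2 = a1*b2 - a2*b1"

lemma mink_Phi_Phi:
  assumes "X$1 = l*(a1^2+a2^2)" "X$2 = l*(a1^2-a2^2)" "X$3 = l*(2*a1*a2)"
      and "Y$1 = l'*(b1^2+b2^2)" "Y$2 = l'*(b1^2-b2^2)" "Y$3 = l'*(2*b1*b2)"
  shows "mink X Y = 2*l*l'*(dt a1 a2 b1 b2)^2"
  unfolding mink_def dt_def assms by algebra

lemma mink_Psi_Phi:
  assumes "V$1 = k*(a1*b1+a2*b2)" "V$2 = k*(a1*b1-a2*b2)" "V$3 = k*(a1*b2+a2*b1)"
      and "Y$1 = l'*(c1^2+c2^2)" "Y$2 = l'*(c1^2-c2^2)" "Y$3 = l'*(2*c1*c2)"
  shows "mink V Y = 2*k*l'*dt a1 a2 c1 c2 * dt b1 b2 c1 c2"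
  unfolding mink_def dt_def assms by algebra

lemma mink_Psi_Psi:
  assumes "V$1 = k*(a1*b1+a2*b2)" "V$2 = k*(a1*b1-a2*b2)" "V$3 = k*(a1*b2+a2*b1)"
      and "W$1 = k'*(c1*d1+c2*d2)" "W$2 = k'*(c1*d1-c2*d2)" "W$3 = k'*(c1*d2+c2*d1)"
  shows "mink V W = k*k'*(dt a1 a2 c1 c2 * dt b1 b2 d1 d2 + dt a1 a2 d1 d2 * dt b1 b2 c1 c2)"
  unfolding mink_def dt_def assms by algebra

lemma decomp:
  assumes "X$1 = l*(a1^2+a2^2)" "X$2 = l*(a1^2-a2^2)" "X$3 = l*(2*a1*a2)"
      and "Y$1 = l'*(b1^2+b2^2)" "Y$2 = l'*(b1^2-b2^2)" "Y$3 = l'*(2*b1*b2)"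
      and "l > 0" "l' > 0" "dt a1 a2 b1 b2 \<noteq> 0"
      and "mink V X = 0" "mink V Y = 0"
  shows "\<exists>k. V$1 = k*(a1*b1+a2*b2) \<and> V$2 = k*(a1*b1-a2*b2) \<and> V$3 = k*(a1*b2+a2*b1)"
proof -
  define d where "d = dt a1 a2 b1 b2"
  define q1 where "q1 = V$1"
  define q2 where "q2 = V$2"
  define q3 where "q3 = V$3"
  define p where "p = q1*(a1*b1+a2*b2) - q2*(a1*b1-a2*b2) - q3*(a1*b2+a2*b1)"
  have "mink V X = l*(q1*(a1^2+a2^2) - q2*(a1^2-a2^2) - q3*(2*a1*a2))"
    unfolding mink_def assms(1-3) q1_def q2_def q3_def by algebra
  hence ha: "q1*(a1^2+a2^2) - q2*(a1^2-a2^2) - q3*(2*a1*a2) = 0"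
    using assms(10) assms(7) by simp
  have "mink V Y = l'*(q1*(b1^2+b2^2) - q2*(b1^2-b2^2) - q3*(2*b1*b2))"
    unfolding mink_def assms(4-6) q1_def q2_def q3_def by algebra
  hence hb: "q1*(b1^2+b2^2) - q2*(b1^2-b2^2) - q3*(2*b1*b2) = 0"
    using assms(11) assms(8) by simp
  have i1: "2*d^2*q1 = (q1*(b1^2+b2^2) - q2*(b1^2-b2^2) - q3*(2*b1*b2))*(a1^2+a2^2)
      + (q1*(a1^2+a2^2) - q2*(a1^2-a2^2) - q3*(2*a1*a2))*(b1^2+b2^2) - 2*p*(a1*b1+a2*b2)"
    unfolding d_def dt_def p_def by algebra
  have i2: "2*d^2*q2 = (q1*(b1^2+b2^2) - q2*(b1^2-b2^2) - q3*(2*b1*b2))*(a1^2-a2^2)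
      + (q1*(a1^2+a2^2) - q2*(a1^2-a2^2) - q3*(2*a1*a2))*(b1^2-b2^2) - 2*p*(a1*b1-a2*b2)"
    unfolding d_def dt_def p_def by algebra
  have i3: "2*d^2*q3 = (q1*(b1^2+b2^2) - q2*(b1^2-b2^2) - q3*(2*b1*b2))*(2*a1*a2)
      + (q1*(a1^2+a2^2) - q2*(a1^2-a2^2) - q3*(2*a1*a2))*(2*b1*b2) - 2*p*(a1*b2+a2*b1)"
    unfolding d_def dt_def p_def by algebra
  have dn: "d \<noteq> 0" using assms(9) d_def by simp
  have e1: "d^2 * q1 = -p*(a1*b1+a2*b2)" using i1 ha hb by algebra
  have e2: "d^2 * q2 = -p*(a1*b1-a2*b2)" using i2 ha hb by algebra
  have e3: "d^2 * q3 = -p*(a1*b2+a2*b1)" using i3 ha hb by algebra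
  have d2: "d^2 \<noteq> 0" using dn by simp
  have f1: "q1 = (-p/d^2)*(a1*b1+a2*b2)"
  proof -
    have "q1 = (d^2 * q1)/d^2" using d2 by simp
    also have "... = (-p/d^2)*(a1*b1+a2*b2)" unfolding e1 by simp
    finally show ?thesis .
  qed
  have f2: "q2 = (-p/d^2)*(a1*b1-a2*b2)"
  proof -
    have "q2 = (d^2 * q2)/d^2" using d2 by simp
    also have "... = (-p/d^2)*(a1*b1-a2*b2)" unfolding e2 by simp
    finally show ?thesis .
  qed
  have f3: "q3 = (-p/d^2)*(a1*b2+a2*b1)"
  proof -
    have "q3 = (d^2 * q3)/d^2" using d2 by simp
    also have "... = (-p/d^2)*(a1*b2+a2*b1)" unfolding e3 by simp
    finally show ?thesis .
  qed
  show ?thesis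
    using f1 f2 f3 unfolding q1_def q2_def q3_def by blast
qed

lemma at_inf_cmod:
  assumes "at_inf X" shows "cmod (Complex (X$2) (X$3)) = X$1"
proof -
  have "X$1^2 = X$2^2 + X$3^2" "X$1 > 0" using assms unfolding at_inf_def mink_def
    by (auto simp: power2_eq_square)
  thus ?thesis by (simp add: complex_norm real_sqrt_unique)
qed

lemma at_inf_ang:
  assumes "at_inf X" shows "X$2 = X$1 * cos (ang X)" "X$3 = X$1 * sin (ang X)"
  using cos_Arg2pi[of "Complex (X$2) (X$3)"] sin_Arg2pi[of "Complex (X$2) (X$3)"]
    at_inf_cmod[OF assms] unfolding ang_def by auto

lemma at_inf_cpos:
  assumes "at_inf M" "at_inf X"
  shows "X$2 = X$1 * cos (ang M + cpos M X)" "X$3 = X$1 * sin (ang M + cpos M X)"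
proof -
  define zM where "zM = Complex (M$2) (M$3)"
  define zX where "zX = Complex (X$2) (X$3)"
  define q where "q = zX / zM"
  have nM: "cmod zM = M$1" using at_inf_cmod[OF assms(1)] zM_def by simp
  have nX: "cmod zX = X$1" using at_inf_cmod[OF assms(2)] zX_def by simp
  have M1: "M$1 > 0" using assms(1) unfolding at_inf_def by simp
  have zM0: "zM \<noteq> 0" using nM M1 by auto
  have nq: "cmod q = X$1 / M$1" unfolding q_def using nM nX by (simp add: norm_divide)
  have cq: "Re q = (X$1 / M$1) * cos (cpos M X)" "Im q = (X$1 / M$1) * sin (cpos M X)"
    using cos_Arg2pi[of q] sin_Arg2pi[of q] nq unfolding cpos_def q_def zX_def zM_def by auto
  have cM: "Re zM = M$1 * cos (ang M)" "Im zM = M$1 * sin (ang M)"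
    using cos_Arg2pi[of zM] sin_Arg2pi[of zM] nM unfolding ang_def zM_def by auto
  have zX: "zX = zM * q" unfolding q_def using zM0 by simp
  have "X$2 = Re zX" "X$3 = Im zX" unfolding zX_def by simp_all
  hence "X$2 = Re zM * Re q - Im zM * Im q" "X$3 = Re zM * Im q + Im zM * Re q"
    using zX by simp_all
  thus "X$2 = X$1 * cos (ang M + cpos M X)" "X$3 = X$1 * sin (ang M + cpos M X)"
    unfolding cq cM using M1 by (auto simp: cos_add sin_add field_simps)
qed

lemma cpos_self:
  assumes "at_inf M" shows "cpos M M = 0"
proof -
  have "Complex (M$2) (M$3) \<noteq> 0" using at_inf_cmod[OF assms] assms unfolding at_inf_def by auto
  thus ?thesis unfolding cpos_def using Arg2pi_of_real[of 1] by simp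
qed

lemma half_angle_sign:
  fixes a g :: real
  assumes "cos (2*a) = cos (2*g)" "sin (2*a) = sin (2*g)"
  shows "\<exists>e. (e = 1 \<or> e = -1) \<and> cos a = e * cos g \<and> sin a = e * sin g"
proof -
  define t where "t = a - g"
  have "cos (2*t) = cos (2*a) * cos (2*g) + sin (2*a) * sin (2*g)"
    unfolding t_def by (simp add: right_diff_distrib cos_diff)
  also have "... = 1" using assms by (simp add: power2_eq_square[symmetric])
  finally have c2: "cos (2*t) = 1" .
  hence "(cos t)^2 = 1" by (simp add: cos_double_cos)
  hence ct: "cos t = 1 \<or> cos t = -1" by (simp add: power2_eq_1_iff)
  have st: "sin t = 0" using \<open>(cos t)^2 = 1\<close> sin_cos_squared_add[of t] by simp
  have a: "a = g + t" unfolding t_def by simp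
  show ?thesis
    apply (rule exI[of _ "cos t"])
    using ct st unfolding a by (auto simp: cos_add sin_add)
qed

lemma hyp_identity:
  fixes x1 x2 x3 :: real
  assumes "x1 > 0" "x2 > 0" "x3 > 0" "x1 \<noteq> 1" "x2 \<noteq> 1"
  shows "4 * (cosh ((ln x1 + ln x3) / 2) * cosh ((ln x2 - ln x3) / 2))
             / (sinh (ln x1 / 2) * sinh (ln x2 / 2)) - 2
       = 4 * (x1*x2 + x1*x3 + x2/x3 + 1) / ((x1 - 1)*(x2 - 1)) - 2"
proof -
  define y1 where "y1 = exp (ln x1 / 2)"
  define y2 where "y2 = exp (ln x2 / 2)"
  define y3 where "y3 = exp (ln x3 / 2)"
  have sq: "exp (ln x / 2) ^ 2 = x" if "x > 0" for x :: real
    using that by (simp add: exp_double[symmetric] power2_eq_square exp_add[symmetric])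
  have x1: "x1 = y1^2" using sq assms unfolding y1_def by simp
  have x2: "x2 = y2^2" using sq assms unfolding y2_def by simp
  have x3: "x3 = y3^2" using sq assms unfolding y3_def by simp
  have p: "y1 > 0" "y2 > 0" "y3 > 0" unfolding y1_def y2_def y3_def by simp_all
  have n1: "y1 \<noteq> 1" using assms(4) x1 by auto
  have n2: "y2 \<noteq> 1" using assms(5) x2 by auto
  have c: "cosh z = (exp z + 1/exp z)/2" for z :: real by (simp add: cosh_def exp_minus field_simps)
  have s: "sinh z = (exp z - 1/exp z)/2" for z :: real by (simp add: sinh_def exp_minus field_simps)
  have x13: "exp ((ln x1 + ln x3)/2) = y1*y3" unfolding y1_def y3_def
    by (simp add: exp_add[symmetric] add_divide_distrib)
  have x23: "exp ((ln x2 - ln x3)/2) = y2/y3" unfolding y2_def y3_def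
    by (simp add: exp_diff[symmetric] diff_divide_distrib)
  have e1: "cosh ((ln x1 + ln x3) / 2) = (y1*y3 + 1/(y1*y3))/2" unfolding c x13 ..
  have e2: "cosh ((ln x2 - ln x3) / 2) = (y2/y3 + y3/y2)/2" unfolding c x23 by simp
  have e3: "sinh (ln x1 / 2) = (y1 - 1/y1)/2" unfolding s y1_def ..
  have e4: "sinh (ln x2 / 2) = (y2 - 1/y2)/2" unfolding s y2_def ..
  have "(y1-1)*(y1+1) \<noteq> 0" using n1 p by simp
  hence d1: "y1*y1 - 1 \<noteq> 0" by (simp add: algebra_simps)
  have "(y2-1)*(y2+1) \<noteq> 0" using n2 p by simp
  hence d2: "y2*y2 - 1 \<noteq> 0" by (simp add: algebra_simps)
  have d1': "y1^2 - 1 \<noteq> 0" "y1^2 \<noteq> 1" using d1 by (auto simp: power2_eq_square)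
  have d2': "y2^2 - 1 \<noteq> 0" "y2^2 \<noteq> 1" using d2 by (auto simp: power2_eq_square)
  have gen: "4*((P/(2*y1*y3))*(Q/(2*y2*y3)))/((R/(2*y1))*(S/(2*y2))) = 4*(P*Q)/(y3*y3*R*S)"
    if "R \<noteq> 0" "S \<noteq> 0" for P Q R S using that p by (simp add: field_simps)
  have ea: "(y1*y3 + 1/(y1*y3))/2 = (y1*y1*y3*y3+1)/(2*y1*y3)" using p by (simp add: field_simps)
  have eb: "(y2/y3 + y3/y2)/2 = (y2*y2+y3*y3)/(2*y2*y3)" using p by (simp add: field_simps)
  have ec: "(y1 - 1/y1)/2 = (y1*y1-1)/(2*y1)" using p by (simp add: field_simps)
  have ed: "(y2 - 1/y2)/2 = (y2*y2-1)/(2*y2)" using p by (simp add: field_simps)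
  have l: "4 * (((y1*y3 + 1/(y1*y3))/2) * ((y2/y3 + y3/y2)/2)) / (((y1 - 1/y1)/2) * ((y2 - 1/y2)/2))
      = 4 * ((y1*y1*y3*y3 + 1) * (y2*y2 + y3*y3)) / (y3*y3*(y1*y1 - 1)*(y2*y2 - 1))"
    unfolding ea eb ec ed gen[OF d1 d2] by (simp add: mult.assoc)
  have nn: "y1^2*y2^2 + y1^2*y3^2 + y2^2/y3^2 + 1 = ((y1*y1*y3*y3 + 1) * (y2*y2 + y3*y3))/(y3*y3)"
    using p by (simp add: field_simps power2_eq_square)
  have r: "4 * (y1^2*y2^2 + y1^2*y3^2 + y2^2/y3^2 + 1) / ((y1^2 - 1)*(y2^2 - 1))
      = 4 * ((y1*y1*y3*y3 + 1) * (y2*y2 + y3*y3)) / (y3*y3*(y1*y1 - 1)*(y2*y2 - 1))"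
    unfolding nn using p by (simp add: power2_eq_square field_simps)
  show ?thesis unfolding e1 e2 e3 e4 unfolding x1 x2 x3 l r ..
qed


lemma mink_sym: "mink x y = mink y x" by (simp add: mink_def algebra_simps)
lemma mink_add: "mink (x + y) z = mink x z + mink y z" by (simp add: mink_def algebra_simps)
lemma mink_lin: "mink (s *\<^sub>R x + u *\<^sub>R y) (p *\<^sub>R z + q *\<^sub>R w)
   = s*p*mink x z + s*q*mink x w + u*p*mink y z + u*q*mink y w"
  by (simp add: mink_def algebra_simps)
lemma vec3_eq: "(x::real^3)$1 = y$1 \<Longrightarrow> x$2 = y$2 \<Longrightarrow> x$3 = y$3 \<Longrightarrow> x = y"
  by (simp add: vec_eq_iff forall_3)
lemma dt_anti: "dt a1 a2 b1 b2 = - dt b1 b2 a1 a2" by (simp add: dt_def)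
lemma dt_self: "dt a1 a2 a1 a2 = 0" by (simp add: dt_def)

lemma ratio_bound:
  fixes S U P Q ab cd ac ad bc bd :: real
  assumes "S>0" "U>0" "P>0" "Q>0" "ab*cd > 0"
  shows "(ac*bd+ad*bc)/(ab*cd) \<le> 2*(S*P*ac^2 + S*Q*ad^2 + U*P*bc^2 + U*Q*bd^2) / sqrt((4*S*U*ab^2)*(4*P*Q*cd^2))"
proof -
  define r1 where "r1 = sqrt (S*P)"
  define r2 where "r2 = sqrt (U*Q)"
  define r3 where "r3 = sqrt (S*Q)"
  define r4 where "r4 = sqrt (U*P)"
  have r1s: "r1^2 = S*P" unfolding r1_def using assms by simp
  have r2s: "r2^2 = U*Q" unfolding r2_def using assms by simp
  have r3s: "r3^2 = S*Q" unfolding r3_def using assms by simp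
  have r4s: "r4^2 = U*P" unfolding r4_def using assms by simp
  have rp: "r1 > 0" "r2 > 0" unfolding r1_def r2_def using assms by simp_all
  have r34: "r3*r4 = r1*r2" unfolding r1_def r2_def r3_def r4_def
    by (simp add: real_sqrt_mult[symmetric] algebra_simps)
  have "(4*S*U*ab^2)*(4*P*Q*cd^2) = (4*r1*r2*(ab*cd))^2"
    by (simp add: power_mult_distrib r1s r2s)
  hence sq: "sqrt((4*S*U*ab^2)*(4*P*Q*cd^2)) = 4*r1*r2*(ab*cd)"
    using rp assms(5) by simp
  have num: "2*(S*P*ac^2 + S*Q*ad^2 + U*P*bc^2 + U*Q*bd^2)
     = 4*r1*r2*(ac*bd+ad*bc) + 2*(r1*ac - r2*bd)^2 + 2*(r3*ad - r4*bc)^2"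
  proof -
    have "2*(r1*ac - r2*bd)^2 + 2*(r3*ad - r4*bc)^2 + 4*r1*r2*(ac*bd+ad*bc)
       = 2*(r1^2*ac^2 + r3^2*ad^2 + r4^2*bc^2 + r2^2*bd^2) + 4*r1*r2*(ad*bc) - 4*(r3*r4)*(ad*bc)"
      by algebra
    also have "... = 2*(S*P*ac^2 + S*Q*ad^2 + U*P*bc^2 + U*Q*bd^2)"
      unfolding r1s r2s r3s r4s r34 by simp
    finally show ?thesis by simp
  qed
  have den: "4*r1*r2*(ab*cd) > 0" using rp assms(5) by simp
  have "(ac*bd+ad*bc)/(ab*cd) = (4*r1*r2*(ac*bd+ad*bc))/(4*r1*r2*(ab*cd))"
    using rp by simp
  also have "... \<le> (4*r1*r2*(ac*bd+ad*bc) + 2*(r1*ac - r2*bd)^2 + 2*(r3*ad - r4*bc)^2)/(4*r1*r2*(ab*cd))"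
    using den by (intro divide_right_mono) auto
  finally show ?thesis unfolding sq num .
qed

lemma ratio_attain:
  fixes ab cd ac ad bc bd :: real
  assumes "ab*cd > 0" "ac*bd > 0" "ad*bc > 0"
  shows "\<exists>S U P Q. S>0 \<and> U>0 \<and> P>0 \<and> Q>0 \<and>
     2*(S*P*ac^2 + S*Q*ad^2 + U*P*bc^2 + U*Q*bd^2) / sqrt((4*S*U*ab^2)*(4*P*Q*cd^2))
       = (ac*bd+ad*bc)/(ab*cd)"
proof -
  define \<alpha> where "\<alpha> = \<bar>ac\<bar>"
  define \<beta> where "\<beta> = \<bar>ad\<bar>"
  define \<gamma> where "\<gamma> = \<bar>bc\<bar>"
  define \<epsilon> where "\<epsilon> = \<bar>bd\<bar>"
  have pos: "\<alpha> > 0" "\<beta> > 0" "\<gamma> > 0" "\<epsilon> > 0" unfolding \<alpha>_def \<beta>_def \<gamma>_def \<epsilon>_def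
    using assms by auto
  have ae: "\<alpha>*\<epsilon> = ac*bd" unfolding \<alpha>_def \<epsilon>_def using assms(2) by (simp add: abs_mult[symmetric])
  have bg: "\<beta>*\<gamma> = ad*bc" unfolding \<beta>_def \<gamma>_def using assms(3) by (simp add: abs_mult[symmetric])
  have sqs: "ac^2 = \<alpha>^2" "ad^2 = \<beta>^2" "bc^2 = \<gamma>^2" "bd^2 = \<epsilon>^2"
    unfolding \<alpha>_def \<beta>_def \<gamma>_def \<epsilon>_def by simp_all
  define S where "S = \<epsilon>*\<gamma>/(\<alpha>*\<beta>)"
  define P where "P = \<epsilon>*\<beta>/(\<alpha>*\<gamma>)"
  have SP: "S > 0" "P > 0" unfolding S_def P_def using pos by simp_all
  have "(4*S*1*ab^2)*(4*P*1*cd^2) = (4*(\<epsilon>/\<alpha>)*(ab*cd))^2"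
    unfolding S_def P_def using pos by (simp add: field_simps power2_eq_square)
  hence sq: "sqrt((4*S*1*ab^2)*(4*P*1*cd^2)) = 4*(\<epsilon>/\<alpha>)*(ab*cd)"
    using pos assms(1) by simp
  have num: "2*(S*P*ac^2 + S*1*ad^2 + 1*P*bc^2 + 1*1*bd^2) = 4*\<epsilon>*(\<alpha>*\<epsilon> + \<beta>*\<gamma>)/\<alpha>"
    unfolding sqs S_def P_def using pos by (simp add: field_simps power2_eq_square)
  have "2*(S*P*ac^2 + S*1*ad^2 + 1*P*bc^2 + 1*1*bd^2) / sqrt((4*S*1*ab^2)*(4*P*1*cd^2))
      = (\<alpha>*\<epsilon> + \<beta>*\<gamma>)/(ab*cd)"
  proof -
    have n0: "ab \<noteq> 0" "cd \<noteq> 0" using assms(1) by auto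
    show ?thesis unfolding sq num using pos n0 by (simp add: field_simps)
  qed
  hence "2*(S*P*ac^2 + S*1*ad^2 + 1*P*bc^2 + 1*1*bd^2) / sqrt((4*S*1*ab^2)*(4*P*1*cd^2))
      = (ac*bd+ad*bc)/(ab*cd)" unfolding ae bg .
  thus ?thesis using SP by (intro exI[of _ S] exI[of _ 1] exI[of _ P] exI[of _ 1]) simp
qed

lemma core:
  fixes M N A B C D C' \<delta>1 \<delta>2 :: "real^3" and \<sigma> :: real
  assumes rM: "M$1 = lM*(m1^2+m2^2)" "M$2 = lM*(m1^2-m2^2)" "M$3 = lM*(2*m1*m2)"
      and rN: "N$1 = lN*(n1^2+n2^2)" "N$2 = lN*(n1^2-n2^2)" "N$3 = lN*(2*n1*n2)"
      and rA: "A$1 = lA*(a1^2+a2^2)" "A$2 = lA*(a1^2-a2^2)" "A$3 = lA*(2*a1*a2)"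
      and rB: "B$1 = lB*(b1^2+b2^2)" "B$2 = lB*(b1^2-b2^2)" "B$3 = lB*(2*b1*b2)"
      and rC: "C$1 = lC*(c1^2+c2^2)" "C$2 = lC*(c1^2-c2^2)" "C$3 = lC*(2*c1*c2)"
      and rD: "D$1 = lD*(d1^2+d2^2)" "D$2 = lD*(d1^2-d2^2)" "D$3 = lD*(2*d1*d2)"
      and rE: "C'$1 = lE*(e1^2+e2^2)" "C'$2 = lE*(e1^2-e2^2)" "C'$3 = lE*(2*e1*e2)"
      and lpos: "lM > 0" "lN > 0" "lA > 0" "lB > 0" "lC > 0" "lD > 0" "lE > 0"
      and unit: "c1^2+c2^2 = 1" "e1^2+e2^2 = 1"
      and sg: "\<sigma> = 1 \<or> \<sigma> = -1"
      and sm: "dt m1 m2 n1 n2 > 0" "dt m1 m2 a1 a2 > 0" "dt m1 m2 b1 b2 > 0"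
              "dt m1 m2 c1 c2 > 0" "dt m1 m2 d1 d2 > 0"
      and ss: "\<sigma> * dt c1 c2 d1 d2 > 0" "\<sigma> * dt c1 c2 n1 n2 > 0" "\<sigma> * dt c1 c2 a1 a2 > 0"
              "\<sigma> * dt c1 c2 b1 b2 > 0" "\<sigma> * dt d1 d2 n1 n2 > 0" "\<sigma> * dt d1 d2 a1 a2 > 0"
              "\<sigma> * dt d1 d2 b1 b2 > 0" "\<sigma> * dt n1 n2 a1 a2 > 0" "\<sigma> * dt n1 n2 b1 b2 > 0"
              "\<sigma> * dt a1 a2 b1 b2 > 0"
      and th: "theta M N A B = ln (dt m1 m2 a1 a2 * dt n1 n2 b1 b2 / (dt n1 n2 a1 a2 * dt m1 m2 b1 b2))"
              "theta M N D C = ln (dt m1 m2 d1 d2 * dt n1 n2 c1 c2 / (dt n1 n2 d1 d2 * dt m1 m2 c1 c2))"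
              "theta M N B C' = ln (dt m1 m2 b1 b2 * dt n1 n2 e1 e2 / (dt n1 n2 b1 b2 * dt m1 m2 e1 e2))"
      and ot: "other_terminal M N C C'"
      and dl: "mink \<delta>1 \<delta>1 = -2" "mink \<delta>2 \<delta>2 = -2"
          "mink \<delta>1 A = 0" "mink \<delta>1 B = 0" "mink \<delta>2 C = 0" "mink \<delta>2 D = 0"
          "line_pts M N \<subseteq> Hplus \<delta>1" "line_pts M N \<subseteq> Hplus \<delta>2"
  shows "mink \<delta>1 \<delta>2 = 2 * cosh (line_dist A B C D) \<and>
         2 * cosh (line_dist A B C D) =
           4 * (cosh ((theta M N A B + theta M N B C') / 2) *
                cosh ((theta M N D C - theta M N B C') / 2))
             / (sinh (theta M N A B / 2) * sinh (theta M N D C / 2)) - 2"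
proof -
  define ab where "ab = dt a1 a2 b1 b2"
  define ac where "ac = dt a1 a2 c1 c2"
  define ad where "ad = dt a1 a2 d1 d2"
  define bc where "bc = dt b1 b2 c1 c2"
  define bd where "bd = dt b1 b2 d1 d2"
  define cd where "cd = dt c1 c2 d1 d2"
  define mn where "mn = dt m1 m2 n1 n2"
  define ma where "ma = dt m1 m2 a1 a2"
  define mb where "mb = dt m1 m2 b1 b2"
  define mc where "mc = dt m1 m2 c1 c2"
  define md where "md = dt m1 m2 d1 d2"
  define me where "me = dt m1 m2 e1 e2"
  define na where "na = dt n1 n2 a1 a2"
  define nb where "nb = dt n1 n2 b1 b2"
  define nc where "nc = dt n1 n2 c1 c2"
  define nd where "nd = dt n1 n2 d1 d2"
  define ne where "ne = dt n1 n2 e1 e2"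
  have ss2: "\<sigma> * \<sigma> = 1" using sg by auto
  have pp: "x * y > 0" if "\<sigma> * x > 0" "\<sigma> * y > 0" for x y
  proof -
    have "0 < (\<sigma> * x) * (\<sigma> * y)" using that by simp
    also have "(\<sigma> * x) * (\<sigma> * y) = x * y" using ss2 by (simp add: algebra_simps)
    finally show ?thesis .
  qed
  have pn: "x * y > 0" if "\<sigma> * x < 0" "\<sigma> * y < 0" for x y
    using pp[of "-x" "-y"] that by simp
  have abcd: "ab * cd > 0" unfolding ab_def cd_def using pp ss by blast
  have "ac*bd = dt c1 c2 a1 a2 * dt d1 d2 b1 b2" unfolding ac_def bd_def dt_def by algebra
  hence acbd: "ac * bd > 0" using pp[of "dt c1 c2 a1 a2" "dt d1 d2 b1 b2"] ss by simp
  have "ad*bc = dt d1 d2 a1 a2 * dt c1 c2 b1 b2" unfolding ad_def bc_def dt_def by algebra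
  hence adbc: "ad * bc > 0" using pp[of "dt d1 d2 a1 a2" "dt c1 c2 b1 b2"] ss by simp
  have nanb: "na * nb > 0" unfolding na_def nb_def using pp ss by blast
  have "nc*nd = dt c1 c2 n1 n2 * dt d1 d2 n1 n2" unfolding nc_def nd_def dt_def by algebra
  hence ncnd: "nc * nd > 0" using pp[of "dt c1 c2 n1 n2" "dt d1 d2 n1 n2"] ss by simp
  have "nc*nb = - (dt c1 c2 n1 n2 * dt n1 n2 b1 b2)" unfolding nc_def nb_def dt_def by algebra
  hence ncnb: "nc * nb < 0" using pp[of "dt c1 c2 n1 n2" "dt n1 n2 b1 b2"] ss by simp
  have pos_m: "mn > 0" "ma > 0" "mb > 0" "mc > 0" "md > 0"
    using sm unfolding mn_def ma_def mb_def mc_def md_def by auto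
  have abn: "ab \<noteq> 0" "cd \<noteq> 0" using abcd by auto
  have pl1: "ma * nb - mb * na = mn * ab" unfolding ma_def nb_def mb_def na_def mn_def ab_def dt_def by algebra
  have pl2: "md * nc - mc * nd = - (mn * cd)" unfolding md_def nc_def mc_def nd_def mn_def cd_def dt_def by algebra
  have pl3: "mb * nd - md * nb = mn * bd" unfolding mb_def nd_def md_def nb_def mn_def bd_def dt_def by algebra
  have pl4: "ma * nc - mc * na = mn * ac" unfolding ma_def nc_def mc_def na_def mn_def ac_def dt_def by algebra
  have pl5: "ac * bd = ab * cd + ad * bc" unfolding ac_def bd_def ab_def cd_def ad_def bc_def dt_def by algebra
  obtain k1 where k1: "\<delta>1$1 = k1*(a1*b1+a2*b2)" "\<delta>1$2 = k1*(a1*b1-a2*b2)" "\<delta>1$3 = k1*(a1*b2+a2*b1)"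
    using decomp[OF rA rB lpos(3) lpos(4) _ dl(3) dl(4)] abn unfolding ab_def by blast
  obtain k2 where k2: "\<delta>2$1 = k2*(c1*d1+c2*d2)" "\<delta>2$2 = k2*(c1*d1-c2*d2)" "\<delta>2$3 = k2*(c1*d2+c2*d1)"
    using decomp[OF rC rD lpos(5) lpos(6) _ dl(5) dl(6)] abn unfolding cd_def by blast
  have "mink \<delta>1 \<delta>1 = - (k1*k1*ab^2)"
    using mink_Psi_Psi[OF k1 k1] unfolding ab_def by (simp add: dt_self dt_anti[of b1 b2 a1 a2] power2_eq_square)
  hence k1sq: "k1*k1*ab^2 = 2" using dl(1) by simp
  have "mink \<delta>2 \<delta>2 = - (k2*k2*cd^2)"
    using mink_Psi_Psi[OF k2 k2] unfolding cd_def by (simp add: dt_self dt_anti[of d1 d2 c1 c2] power2_eq_square)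
  hence k2sq: "k2*k2*cd^2 = 2" using dl(2) by simp
  have MN: "M + N \<in> line_pts M N" unfolding line_pts_def
    by (rule CollectI, rule exI[of _ 1], rule exI[of _ 1]) simp
  have h1: "mink (M + N) \<delta>1 \<ge> 0" using MN dl(7) unfolding Hplus_def by auto
  have h2: "mink (M + N) \<delta>2 \<ge> 0" using MN dl(8) unfolding Hplus_def by auto
  have "mink (M + N) \<delta>1 = 2*k1*(lM*(ma*mb) + lN*(na*nb))"
    unfolding mink_add mink_sym[of M] mink_sym[of N]
      mink_Psi_Phi[OF k1 rM] mink_Psi_Phi[OF k1 rN] ma_def mb_def na_def nb_def
    by (simp add: dt_anti[of a1 a2 m1 m2] dt_anti[of b1 b2 m1 m2] dt_anti[of a1 a2 n1 n2] dt_anti[of b1 b2 n1 n2] algebra_simps)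
  moreover have "lM*(ma*mb) + lN*(na*nb) > 0" using pos_m nanb lpos by (simp add: add_pos_pos)
  ultimately have "k1 \<ge> 0" using h1 by (simp add: zero_le_mult_iff)
  moreover have "k1 \<noteq> 0" using k1sq by auto
  ultimately have k1p: "k1 > 0" by simp
  have "mink (M + N) \<delta>2 = 2*k2*(lM*(mc*md) + lN*(nc*nd))"
    unfolding mink_add mink_sym[of M] mink_sym[of N]
      mink_Psi_Phi[OF k2 rM] mink_Psi_Phi[OF k2 rN] mc_def md_def nc_def nd_def
    by (simp add: dt_anti[of c1 c2 m1 m2] dt_anti[of d1 d2 m1 m2] dt_anti[of c1 c2 n1 n2] dt_anti[of d1 d2 n1 n2] algebra_simps)
  moreover have "lM*(mc*md) + lN*(nc*nd) > 0" using pos_m ncnd lpos by (simp add: add_pos_pos)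
  ultimately have "k2 \<ge> 0" using h2 by (simp add: zero_le_mult_iff)
  moreover have "k2 \<noteq> 0" using k2sq by auto
  ultimately have k2p: "k2 > 0" by simp
  have "(k1*k2*(ab*cd))^2 = (k1*k1*ab^2)*(k2*k2*cd^2)" by algebra
  hence "(k1*k2*(ab*cd))^2 = 2^2" unfolding k1sq k2sq by simp
  moreover have "k1*k2*(ab*cd) > 0" using k1p k2p abcd by simp
  ultimately have K: "k1*k2*(ab*cd) = 2"
  proof -
    assume a1: "(k1*k2*(ab*cd))^2 = 2^2" and a2: "k1*k2*(ab*cd) > 0"
    have "(k1*k2*(ab*cd) - 2)*(k1*k2*(ab*cd) + 2) = 0" using a1 by algebra
    moreover have "k1*k2*(ab*cd) + 2 \<noteq> 0" using a2 by linarith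
    ultimately show ?thesis by simp
  qed
  define Dv where "Dv = (ac*bd + ad*bc)/(ab*cd)"
  have dd12: "mink \<delta>1 \<delta>2 = 2 * Dv"
  proof -
    have "mink \<delta>1 \<delta>2 = k1*k2*(ac*bd + ad*bc)"
      using mink_Psi_Psi[OF k1 k2] unfolding ac_def bd_def ad_def bc_def by simp
    also have "k1*k2 = 2/(ab*cd)" using K abcd abn by (simp add: eq_divide_eq mult.assoc)
    hence "k1*k2*(ac*bd + ad*bc) = 2 * Dv" unfolding Dv_def by simp
    finally show ?thesis .
  qed
  have Dv1: "Dv > 1"
  proof -
    have "Dv = 1 + 2*(ad*bc)/(ab*cd)" unfolding Dv_def pl5 using abcd abn by (simp add: field_simps)
    thus ?thesis using adbc abcd by simp
  qed
  have LD: "line_dist A B C D = arcosh Dv"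
  proof -
    have mAA: "mink A A = 0" using mink_Phi_Phi[OF rA rA] by (simp add: dt_self)
    have mBB: "mink B B = 0" using mink_Phi_Phi[OF rB rB] by (simp add: dt_self)
    have mCC: "mink C C = 0" using mink_Phi_Phi[OF rC rC] by (simp add: dt_self)
    have mDD: "mink D D = 0" using mink_Phi_Phi[OF rD rD] by (simp add: dt_self)
    have mAB: "mink A B = 2*lA*lB*ab^2" using mink_Phi_Phi[OF rA rB] unfolding ab_def .
    have mCD: "mink C D = 2*lC*lD*cd^2" using mink_Phi_Phi[OF rC rD] unfolding cd_def .
    have mAC: "mink A C = 2*lA*lC*ac^2" using mink_Phi_Phi[OF rA rC] unfolding ac_def .
    have mAD: "mink A D = 2*lA*lD*ad^2" using mink_Phi_Phi[OF rA rD] unfolding ad_def .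
    have mBC: "mink B C = 2*lB*lC*bc^2" using mink_Phi_Phi[OF rB rC] unfolding bc_def .
    have mBD: "mink B D = 2*lB*lD*bd^2" using mink_Phi_Phi[OF rB rD] unfolding bd_def .
    have key: "hdist (s *\<^sub>R A + u *\<^sub>R B) (p *\<^sub>R C + q *\<^sub>R D) =
       arcosh (2*((s*lA)*(p*lC)*ac^2 + (s*lA)*(q*lD)*ad^2 + (u*lB)*(p*lC)*bc^2 + (u*lB)*(q*lD)*bd^2)
         / sqrt((4*(s*lA)*(u*lB)*ab^2)*(4*(p*lC)*(q*lD)*cd^2)))" for s u p q
    proof -
      have xx: "mink (s *\<^sub>R A + u *\<^sub>R B) (s *\<^sub>R A + u *\<^sub>R B) = 4*(s*lA)*(u*lB)*ab^2"
        unfolding mink_lin mink_sym[of B A] mAA mBB mAB by algebra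
      have yy: "mink (p *\<^sub>R C + q *\<^sub>R D) (p *\<^sub>R C + q *\<^sub>R D) = 4*(p*lC)*(q*lD)*cd^2"
        unfolding mink_lin mink_sym[of D C] mCC mDD mCD by algebra
      have xy: "mink (s *\<^sub>R A + u *\<^sub>R B) (p *\<^sub>R C + q *\<^sub>R D) =
          2*((s*lA)*(p*lC)*ac^2 + (s*lA)*(q*lD)*ad^2 + (u*lB)*(p*lC)*bc^2 + (u*lB)*(q*lD)*bd^2)"
        unfolding mink_lin mAC mAD mBC mBD by algebra
      show ?thesis unfolding hdist_def xx yy xy ..
    qed
    define SS where "SS = {hdist x y | x y. x \<in> line_pts A B \<and> y \<in> line_pts C D}"
    have ld: "line_dist A B C D = Inf SS" unfolding line_dist_def SS_def ..
    have lower: "arcosh Dv \<le> z" if zin: "z \<in> SS" for z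
    proof -
      obtain x y where z: "z = hdist x y" "x \<in> line_pts A B" "y \<in> line_pts C D"
        using zin unfolding SS_def by blast
      obtain s u where x: "x = s *\<^sub>R A + u *\<^sub>R B" "s > 0" "u > 0" using z(2) unfolding line_pts_def by blast
      obtain p q where y: "y = p *\<^sub>R C + q *\<^sub>R D" "p > 0" "q > 0" using z(3) unfolding line_pts_def by blast
      define rr where "rr = 2*((s*lA)*(p*lC)*ac^2 + (s*lA)*(q*lD)*ad^2 + (u*lB)*(p*lC)*bc^2 + (u*lB)*(q*lD)*bd^2)
         / sqrt((4*(s*lA)*(u*lB)*ab^2)*(4*(p*lC)*(q*lD)*cd^2))"
      have zr: "z = arcosh rr" unfolding z x y key rr_def ..
      have "Dv \<le> rr" unfolding rr_def Dv_def
        by (rule ratio_bound) (use x y lpos abcd in simp_all)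
      hence "\<not> arcosh rr < arcosh Dv" using Dv1 by simp
      thus ?thesis unfolding zr by simp
    qed
    obtain S U P Q where SUPQ: "S>0" "U>0" "P>0" "Q>0"
      "2*(S*P*ac^2 + S*Q*ad^2 + U*P*bc^2 + U*Q*bd^2) / sqrt((4*S*U*ab^2)*(4*P*Q*cd^2)) = Dv"
      using ratio_attain[OF abcd acbd adbc] unfolding Dv_def by blast
    define X where "X = (S/lA) *\<^sub>R A + (U/lB) *\<^sub>R B"
    define Y where "Y = (P/lC) *\<^sub>R C + (Q/lD) *\<^sub>R D"
    have hd: "hdist X Y = arcosh Dv"
      unfolding X_def Y_def key using lpos SUPQ(5) by simp
    have hx: "X \<in> line_pts A B"
      unfolding line_pts_def X_def using SUPQ(1,2) lpos(3,4) by (intro CollectI exI[of _ "S/lA"] exI[of _ "U/lB"]) simp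
    have hy: "Y \<in> line_pts C D"
      unfolding line_pts_def Y_def using SUPQ(3,4) lpos(5,6) by (intro CollectI exI[of _ "P/lC"] exI[of _ "Q/lD"]) simp
    have "arcosh Dv \<in> SS" unfolding SS_def mem_Collect_eq
      using hd hx hy by (intro exI[of _ X] exI[of _ Y]) simp
    thus ?thesis unfolding ld using lower by (rule cInf_eq_minimum)
  qed
  have RHS: "4 * (cosh ((theta M N A B + theta M N B C') / 2) *
                cosh ((theta M N D C - theta M N B C') / 2))
             / (sinh (theta M N A B / 2) * sinh (theta M N D C / 2)) - 2 = 2 * Dv"
  proof -
    have otE: "\<forall>c. C' \<noteq> c *\<^sub>R C" "lines_orth M N C C'"
      using ot unfolding other_terminal_def by auto
    obtain o1 o2 where o: "o1 \<noteq> 0" "o2 \<noteq> 0" "mink o1 M = 0" "mink o1 N = 0"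
        "mink o2 C = 0" "mink o2 C' = 0" "mink o1 o2 = 0"
      using otE(2) unfolding lines_orth_def by blast
    obtain j1 where j1: "o1$1 = j1*(m1*n1+m2*n2)" "o1$2 = j1*(m1*n1-m2*n2)" "o1$3 = j1*(m1*n2+m2*n1)"
      using decomp[OF rM rN lpos(1) lpos(2) _ o(3) o(4)] sm(1) by auto
    have j1n: "j1 \<noteq> 0"
    proof
      assume "j1 = 0"
      hence "o1 = 0" using j1 by (intro vec3_eq) simp_all
      thus False using o(1) by simp
    qed
    have cen: "dt c1 c2 e1 e2 \<noteq> 0"
    proof
      assume ce0: "dt c1 c2 e1 e2 = 0"
      define t where "t = c1*e1 + c2*e2"
      have "(c1^2+c2^2)*e1 = t*c1 - dt c1 c2 e1 e2 * c2" unfolding t_def dt_def by algebra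
      hence e1: "e1 = t*c1" using ce0 unit(1) by simp
      have "(c1^2+c2^2)*e2 = t*c2 + dt c1 c2 e1 e2 * c1" unfolding t_def dt_def by algebra
      hence e2: "e2 = t*c2" using ce0 unit(1) by simp
      have "C' = (lE*t^2/lC) *\<^sub>R C"
        using lpos(5) by (intro vec3_eq) (simp_all add: rE rC e1 e2 field_simps power2_eq_square)
      thus False using otE(1) by blast
    qed
    obtain j2 where j2: "o2$1 = j2*(c1*e1+c2*e2)" "o2$2 = j2*(c1*e1-c2*e2)" "o2$3 = j2*(c1*e2+c2*e1)"
      using decomp[OF rC rE lpos(5) lpos(7) cen o(5) o(6)] by auto
    have j2n: "j2 \<noteq> 0"
    proof
      assume "j2 = 0"
      hence "o2 = 0" using j2 by (intro vec3_eq) simp_all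
      thus False using o(2) by simp
    qed
    have "j1*j2*(mc*ne + me*nc) = 0" using mink_Psi_Psi[OF j1 j2] o(7)
      unfolding mc_def ne_def me_def nc_def by simp
    hence cons: "mc*ne + me*nc = 0" using j1n j2n by simp
    have men: "me \<noteq> 0"
    proof
      assume me0: "me = 0"
      hence "ne = 0" using cons pos_m(4) by simp
      have i1: "mn*e1 = - ne*m1 + me*n1" unfolding mn_def ne_def me_def dt_def by algebra
      have i2: "mn*e2 = - ne*m2 + me*n2" unfolding mn_def ne_def me_def dt_def by algebra
      have "mn^2 = mn^2*(e1^2+e2^2)" using unit(2) by simp
      also have "... = (mn*e1)^2 + (mn*e2)^2" by algebra
      also have "... = 0" unfolding i1 i2 me0 \<open>ne = 0\<close> by simp
      finally show False using pos_m(1) by simp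
    qed
    have divpos: "0 < x/y" if "0 < x*y" for x y :: real
      using that by (simp add: zero_less_mult_iff zero_less_divide_iff)
    define x1 where "x1 = ma*nb/(na*mb)"
    define x2 where "x2 = md*nc/(nd*mc)"
    define x3 where "x3 = mb*ne/(nb*me)"
    have nz: "na \<noteq> 0" "nb \<noteq> 0" "nc \<noteq> 0" "nd \<noteq> 0" "ma \<noteq> 0" "mb \<noteq> 0" "mc \<noteq> 0" "md \<noteq> 0" "mn \<noteq> 0"
      using nanb ncnd pos_m by auto
    have "ne*mc = -(me*nc)" using cons by (simp add: mult.commute eq_neg_iff_add_eq_0)
    hence ne_eq: "ne = -(me*nc)/mc"
    proof -
      assume h: "ne*mc = -(me*nc)"
      have "ne = (ne*mc)/mc" using nz by simp
      also have "... = -(me*nc)/mc" unfolding h ..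
      finally show ?thesis .
    qed
    have x3': "x3 = -(mb*nc)/(nb*mc)" unfolding x3_def ne_eq using nz men by (simp add: field_simps)
    have x1p: "x1 > 0" unfolding x1_def
      by (rule divpos) (use pos_m nanb in \<open>simp add: mult_pos_pos algebra_simps\<close>)
    have eq2: "(md*nc)*(nd*mc) = (md*mc)*(nc*nd)" by simp
    have x2p: "x2 > 0" unfolding x2_def
      by (rule divpos) (unfold eq2, use pos_m ncnd in simp)
    have eq3: "(-(mb*nc))*(nb*mc) = (mb*mc)*(-(nc*nb))" by simp
    have x3p: "x3 > 0" unfolding x3'
      by (rule divpos) (unfold eq3, use pos_m ncnb in \<open>simp add: mult_pos_neg\<close>)
    have x1n: "x1 \<noteq> 1"
    proof
      assume "x1 = 1"
      hence "ma*nb = na*mb" unfolding x1_def using nz by (simp add: divide_eq_1_iff)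
      hence "mn*ab = 0" using pl1 by (simp add: algebra_simps)
      thus False using nz abn by simp
    qed
    have x2n: "x2 \<noteq> 1"
    proof
      assume "x2 = 1"
      hence "md*nc = nd*mc" unfolding x2_def using nz by (simp add: divide_eq_1_iff)
      hence "mn*cd = 0" using pl2 by (simp add: algebra_simps)
      thus False using nz abn by simp
    qed
    have W: "na*mb*nd*mc \<noteq> 0" using nz by simp
    have Nn: "(x1*x2 + x1*x3 + x2/x3 + 1) * (na*mb*nd*mc) = (nb*md - nd*mb)*(ma*nc - na*mc)"
      unfolding x1_def x2_def x3' using nz by (simp add: field_simps)
    have Dd: "((x1-1)*(x2-1)) * (na*mb*nd*mc) = (ma*nb - na*mb)*(md*nc - nd*mc)"
      unfolding x1_def x2_def using nz by (simp add: field_simps)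
    have Nn': "(x1*x2 + x1*x3 + x2/x3 + 1) * (na*mb*nd*mc) = -(mn*mn)*(ac*bd)"
      unfolding Nn using pl3 pl4 by (simp add: algebra_simps; (algebra)?)
    have Dd': "((x1-1)*(x2-1)) * (na*mb*nd*mc) = -(mn*mn)*(ab*cd)"
      unfolding Dd using pl1 pl2 by (simp add: algebra_simps; (algebra)?)
    have q: "(x1*x2 + x1*x3 + x2/x3 + 1)/((x1-1)*(x2-1)) = (ac*bd)/(ab*cd)"
    proof -
      have "(x1*x2 + x1*x3 + x2/x3 + 1)/((x1-1)*(x2-1))
          = ((x1*x2 + x1*x3 + x2/x3 + 1) * (na*mb*nd*mc))/(((x1-1)*(x2-1)) * (na*mb*nd*mc))"
        using W by simp
      also have "... = (-(mn*mn)*(ac*bd))/(-(mn*mn)*(ab*cd))" unfolding Nn' Dd' ..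
      also have "... = (ac*bd)/(ab*cd)" using nz by simp
      finally show ?thesis .
    qed
    have "4 * (cosh ((ln x1 + ln x3) / 2) * cosh ((ln x2 - ln x3) / 2))
             / (sinh (ln x1 / 2) * sinh (ln x2 / 2)) - 2
       = 4 * (x1*x2 + x1*x3 + x2/x3 + 1) / ((x1 - 1)*(x2 - 1)) - 2"
      by (rule hyp_identity) (use x1p x2p x3p x1n x2n in auto)
    also have "... = 4*((ac*bd)/(ab*cd)) - 2" by (simp only: times_divide_eq_right[symmetric] q)
    also have "... = 2*Dv"
    proof -
      have e: "ac*bd + ad*bc = 2*(ac*bd) - ab*cd" using pl5 by simp
      show ?thesis unfolding Dv_def e using abn by (simp add: field_simps)
    qed
    finally show ?thesis unfolding th x1_def[symmetric] x2_def[symmetric] x3_def[symmetric]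
      ma_def[symmetric] mb_def[symmetric] mc_def[symmetric] md_def[symmetric] me_def[symmetric]
      na_def[symmetric] nb_def[symmetric] nc_def[symmetric] nd_def[symmetric] ne_def[symmetric] .
  qed
  show ?thesis unfolding LD RHS dd12 using Dv1 by simp
qed


lemma rep:
  assumes "at_inf M" "at_inf X"
  shows "X$1 = X$1*((cos ((ang M + cpos M X)/2))^2 + (sin ((ang M + cpos M X)/2))^2)"
        "X$2 = X$1*((cos ((ang M + cpos M X)/2))^2 - (sin ((ang M + cpos M X)/2))^2)"
        "X$3 = X$1*(2*cos ((ang M + cpos M X)/2)* sin ((ang M + cpos M X)/2))"
proof -
  define t where "t = (ang M + cpos M X)/2"
  have tt: "ang M + cpos M X = 2*t" unfolding t_def by simp
  show "X$1 = X$1*((cos ((ang M + cpos M X)/2))^2 + (sin ((ang M + cpos M X)/2))^2)"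
    by simp
  have h2: "X$2 = X$1 * cos (2*t)" using at_inf_cpos(1)[OF assms] unfolding tt .
  have h3: "X$3 = X$1 * sin (2*t)" using at_inf_cpos(2)[OF assms] unfolding tt .
  show "X$2 = X$1*((cos ((ang M + cpos M X)/2))^2 - (sin ((ang M + cpos M X)/2))^2)"
    unfolding t_def[symmetric] using h2 by (simp add: cos_double)
  show "X$3 = X$1*(2*cos ((ang M + cpos M X)/2)* sin ((ang M + cpos M X)/2))"
    unfolding t_def[symmetric] using h3[unfolded sin_double] by (simp add: algebra_simps)
qed

lemma pcoord_sign:
  assumes "at_inf M" "at_inf X"
  shows "\<exists>e. (e = 1 \<or> e = -1) \<and> fst (pcoord X) = e * cos ((ang M + cpos M X)/2)
            \<and> snd (pcoord X) = e * sin ((ang M + cpos M X)/2)"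
proof -
  have X1: "X$1 > 0" using assms(2) unfolding at_inf_def by simp
  have "X$1 * cos (ang X) = X$1 * cos (ang M + cpos M X)"
    using at_inf_ang(1)[OF assms(2)] at_inf_cpos(1)[OF assms] by linarith
  hence c0: "cos (ang X) = cos (ang M + cpos M X)" using X1 by simp
  have tw: "2*(ang X/2) = ang X" "2*((ang M + cpos M X)/2) = ang M + cpos M X" by simp_all
  have c: "cos (2*(ang X/2)) = cos (2*((ang M + cpos M X)/2))" unfolding tw by (rule c0)
  have "X$1 * sin (ang X) = X$1 * sin (ang M + cpos M X)"
    using at_inf_ang(2)[OF assms(2)] at_inf_cpos(2)[OF assms] by linarith
  hence s0: "sin (ang X) = sin (ang M + cpos M X)" using X1 by simp
  have s: "sin (2*(ang X/2)) = sin (2*((ang M + cpos M X)/2))" unfolding tw by (rule s0)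
  show ?thesis using half_angle_sign[OF c s] unfolding pcoord_def by simp
qed

lemma cr_formula:
  assumes "at_inf M" "at_inf P" "at_inf Q" "at_inf R" "at_inf S"
  shows "cross_ratio P Q R S =
    dt (cos ((ang M + cpos M P)/2)) (sin ((ang M + cpos M P)/2)) (cos ((ang M + cpos M R)/2)) (sin ((ang M + cpos M R)/2)) *
    dt (cos ((ang M + cpos M Q)/2)) (sin ((ang M + cpos M Q)/2)) (cos ((ang M + cpos M S)/2)) (sin ((ang M + cpos M S)/2)) /
   (dt (cos ((ang M + cpos M Q)/2)) (sin ((ang M + cpos M Q)/2)) (cos ((ang M + cpos M R)/2)) (sin ((ang M + cpos M R)/2)) *
    dt (cos ((ang M + cpos M P)/2)) (sin ((ang M + cpos M P)/2)) (cos ((ang M + cpos M S)/2)) (sin ((ang M + cpos M S)/2)))"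
proof -
  define g1 where "g1 X = cos ((ang M + cpos M X)/2)" for X
  define g2 where "g2 X = sin ((ang M + cpos M X)/2)" for X
  have pd: "pdiff Y X = e X * e Y * dt (g1 X) (g2 X) (g1 Y) (g2 Y)"
    if "fst (pcoord X) = e X * g1 X" "snd (pcoord X) = e X * g2 X"
       "fst (pcoord Y) = e Y * g1 Y" "snd (pcoord Y) = e Y * g2 Y" for X Y e
    unfolding pdiff_def dt_def that by (simp add: algebra_simps)
  obtain eP where eP: "eP = 1 \<or> eP = -1" "fst (pcoord P) = eP * g1 P" "snd (pcoord P) = eP * g2 P"
    using pcoord_sign[OF assms(1) assms(2)] unfolding g1_def g2_def by blast
  obtain eQ where eQ: "eQ = 1 \<or> eQ = -1" "fst (pcoord Q) = eQ * g1 Q" "snd (pcoord Q) = eQ * g2 Q"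
    using pcoord_sign[OF assms(1) assms(3)] unfolding g1_def g2_def by blast
  obtain eR where eR: "eR = 1 \<or> eR = -1" "fst (pcoord R) = eR * g1 R" "snd (pcoord R) = eR * g2 R"
    using pcoord_sign[OF assms(1) assms(4)] unfolding g1_def g2_def by blast
  obtain eS where eS: "eS = 1 \<or> eS = -1" "fst (pcoord S) = eS * g1 S" "snd (pcoord S) = eS * g2 S"
    using pcoord_sign[OF assms(1) assms(5)] unfolding g1_def g2_def by blast
  define e where "e X = (if X = P then eP else if X = Q then eQ else if X = R then eR else eS)" for X
  define E where "E = eP*eQ*eR*eS"
  have En: "E \<noteq> 0" unfolding E_def using eP(1) eQ(1) eR(1) eS(1) by auto
  have pRP: "pdiff R P = eP * eR * dt (g1 P) (g2 P) (g1 R) (g2 R)"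
    unfolding pdiff_def dt_def eP(2,3) eR(2,3) by (simp add: algebra_simps)
  have pSQ: "pdiff S Q = eQ * eS * dt (g1 Q) (g2 Q) (g1 S) (g2 S)"
    unfolding pdiff_def dt_def eQ(2,3) eS(2,3) by (simp add: algebra_simps)
  have pRQ: "pdiff R Q = eQ * eR * dt (g1 Q) (g2 Q) (g1 R) (g2 R)"
    unfolding pdiff_def dt_def eQ(2,3) eR(2,3) by (simp add: algebra_simps)
  have pSP: "pdiff S P = eP * eS * dt (g1 P) (g2 P) (g1 S) (g2 S)"
    unfolding pdiff_def dt_def eP(2,3) eS(2,3) by (simp add: algebra_simps)
  have "cross_ratio P Q R S = (E * (dt (g1 P) (g2 P) (g1 R) (g2 R) * dt (g1 Q) (g2 Q) (g1 S) (g2 S))) /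
      (E * (dt (g1 Q) (g2 Q) (g1 R) (g2 R) * dt (g1 P) (g2 P) (g1 S) (g2 S)))"
    unfolding cross_ratio_def pRP pSQ pRQ pSP E_def by (simp add: algebra_simps)
  also have "... = dt (g1 P) (g2 P) (g1 R) (g2 R) * dt (g1 Q) (g2 Q) (g1 S) (g2 S) /
      (dt (g1 Q) (g2 Q) (g1 R) (g2 R) * dt (g1 P) (g2 P) (g1 S) (g2 S))"
    using En by simp
  finally show ?thesis unfolding g1_def g2_def .
qed

lemma dpos:
  assumes "cpos M X < cpos M Y"
  shows "0 < dt (cos ((ang M + cpos M X)/2)) (sin ((ang M + cpos M X)/2))
                (cos ((ang M + cpos M Y)/2)) (sin ((ang M + cpos M Y)/2))"
proof -
  have e: "dt (cos ((ang M + cpos M X)/2)) (sin ((ang M + cpos M X)/2))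
                (cos ((ang M + cpos M Y)/2)) (sin ((ang M + cpos M Y)/2))
      = sin ((ang M + cpos M Y)/2 - (ang M + cpos M X)/2)"
    unfolding dt_def sin_diff by (simp add: algebra_simps)
  have a: "(ang M + cpos M Y)/2 - (ang M + cpos M X)/2 = (cpos M Y - cpos M X)/2" by (simp add: diff_divide_distrib add_divide_distrib)
  have "sin ((cpos M Y - cpos M X)/2) > 0"
  proof (rule sin_gt_zero)
    show "0 < (cpos M Y - cpos M X)/2" using assms by simp
    have "cpos M Y < 2*pi" "0 \<le> cpos M X" unfolding cpos_def using Arg2pi by auto
    thus "(cpos M Y - cpos M X)/2 < pi" by simp
  qed
  thus ?thesis unfolding e a .
qed

lemma excl:
  fixes M N A B C D :: "real^3"
  assumes rM: "M$1 = lM*(m1^2+m2^2)" "M$2 = lM*(m1^2-m2^2)" "M$3 = lM*(2*m1*m2)"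
      and rN: "N$1 = lN*(n1^2+n2^2)" "N$2 = lN*(n1^2-n2^2)" "N$3 = lN*(2*n1*n2)"
      and rA: "A$1 = lA*(a1^2+a2^2)" "A$2 = lA*(a1^2-a2^2)" "A$3 = lA*(2*a1*a2)"
      and rB: "B$1 = lB*(b1^2+b2^2)" "B$2 = lB*(b1^2-b2^2)" "B$3 = lB*(2*b1*b2)"
      and rC: "C$1 = lC*(c1^2+c2^2)" "C$2 = lC*(c1^2-c2^2)" "C$3 = lC*(2*c1*c2)"
      and rD: "D$1 = lD*(d1^2+d2^2)" "D$2 = lD*(d1^2-d2^2)" "D$3 = lD*(2*d1*d2)"
      and lpos: "lM > 0" "lN > 0" "lA > 0" "lB > 0" "lC > 0" "lD > 0"
      and mn: "dt m1 m2 n1 n2 \<noteq> 0"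
      and sx: "0 < s * (dt m1 m2 a1 a2 * dt n1 n2 a1 a2)" "0 < s * (dt m1 m2 b1 b2 * dt n1 n2 b1 b2)"
              "0 < s * (dt m1 m2 c1 c2 * dt n1 n2 c1 c2)" "0 < s * (dt m1 m2 d1 d2 * dt n1 n2 d1 d2)"
      and hp: "diff_half_planes M N A B C D"
  shows False
proof -
  obtain \<nu> where \<nu>: "mink \<nu> M = 0" "mink \<nu> N = 0"
      "\<forall>x \<in> line_pts A B. mink x \<nu> > 0" "\<forall>y \<in> line_pts C D. mink y \<nu> < 0"
    using hp unfolding diff_half_planes_def by blast
  obtain k where k: "\<nu>$1 = k*(m1*n1+m2*n2)" "\<nu>$2 = k*(m1*n1-m2*n2)" "\<nu>$3 = k*(m1*n2+m2*n1)"
    using decomp[OF rM rN lpos(1) lpos(2) mn \<nu>(1) \<nu>(2)] by blast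
  have AB: "A + B \<in> line_pts A B" unfolding line_pts_def
    by (rule CollectI, rule exI[of _ 1], rule exI[of _ 1]) simp
  have CD: "C + D \<in> line_pts C D" unfolding line_pts_def
    by (rule CollectI, rule exI[of _ 1], rule exI[of _ 1]) simp
  define X1 where "X1 = lA*(dt m1 m2 a1 a2 * dt n1 n2 a1 a2) + lB*(dt m1 m2 b1 b2 * dt n1 n2 b1 b2)"
  define X2 where "X2 = lC*(dt m1 m2 c1 c2 * dt n1 n2 c1 c2) + lD*(dt m1 m2 d1 d2 * dt n1 n2 d1 d2)"
  have "mink (A + B) \<nu> = 2*k*X1"
    unfolding mink_add mink_sym[of A] mink_sym[of B] mink_Psi_Phi[OF k rA] mink_Psi_Phi[OF k rB] X1_def
    by (simp add: algebra_simps)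
  moreover have "mink (A + B) \<nu> > 0" using \<nu>(3) AB by blast
  ultimately have kX1: "k*X1 > 0" by (simp add: algebra_simps)
  have "mink (C + D) \<nu> = 2*k*X2"
    unfolding mink_add mink_sym[of C] mink_sym[of D] mink_Psi_Phi[OF k rC] mink_Psi_Phi[OF k rD] X2_def
    by (simp add: algebra_simps)
  moreover have "mink (C + D) \<nu> < 0" using \<nu>(4) CD by blast
  ultimately have kX2: "k*X2 < 0" by (simp add: algebra_simps)
  have sX1: "s*X1 > 0" unfolding X1_def using sx lpos
    by (simp add: distrib_left mult.left_commute add_pos_pos)
  have sX2: "s*X2 > 0" unfolding X2_def using sx lpos
    by (simp add: distrib_left mult.left_commute add_pos_pos)
  have "(k*X1)*(s*X2) > 0" using kX1 sX2 by simp
  moreover have "(k*X2)*(s*X1) < 0" using kX2 sX1 by (simp add: mult_neg_pos)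
  moreover have "(k*X1)*(s*X2) = (k*X2)*(s*X1)" by simp
  ultimately show False by linarith
qed


theorem lemma8p1p4:
  fixes M N A B C D C' \<delta>1 \<delta>2 :: "real^3"
  assumes "at_inf M" "at_inf N" "at_inf A" "at_inf B" "at_inf C" "at_inf D"
    and "diff_half_planes M N A B C D"
    and "consecutive4 M N A B" and "consecutive4 M N D C"
    and "other_terminal M N C C'"
    and "mink \<delta>1 \<delta>1 = -2" and "mink \<delta>2 \<delta>2 = -2"
    and "mink \<delta>1 A = 0" and "mink \<delta>1 B = 0"
    and "mink \<delta>2 C = 0" and "mink \<delta>2 D = 0"
    and "line_pts M N \<subseteq> Hplus \<delta>1" and "line_pts M N \<subseteq> Hplus \<delta>2"
  shows "mink \<delta>1 \<delta>2 = 2 * cosh (line_dist A B C D) \<and>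
         2 * cosh (line_dist A B C D) =
           4 * (cosh ((theta M N A B + theta M N B C') / 2) *
                cosh ((theta M N D C - theta M N B C') / 2))
             / (sinh (theta M N A B / 2) * sinh (theta M N D C / 2)) - 2"
proof -
  have atE: "at_inf C'" using assms(10) unfolding other_terminal_def by simp
  define g1 where "g1 X = cos ((ang M + cpos M X)/2)" for X
  define g2 where "g2 X = sin ((ang M + cpos M X)/2)" for X
  note rM = rep[OF assms(1) assms(1), unfolded g1_def[symmetric] g2_def[symmetric]]
  note rN = rep[OF assms(1) assms(2), unfolded g1_def[symmetric] g2_def[symmetric]]
  note rA = rep[OF assms(1) assms(3), unfolded g1_def[symmetric] g2_def[symmetric]]
  note rB = rep[OF assms(1) assms(4), unfolded g1_def[symmetric] g2_def[symmetric]]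
  note rC = rep[OF assms(1) assms(5), unfolded g1_def[symmetric] g2_def[symmetric]]
  note rD = rep[OF assms(1) assms(6), unfolded g1_def[symmetric] g2_def[symmetric]]
  note rE = rep[OF assms(1) atE, unfolded g1_def[symmetric] g2_def[symmetric]]
  have lpos: "M$1 > 0" "N$1 > 0" "A$1 > 0" "B$1 > 0" "C$1 > 0" "D$1 > 0" "C'$1 > 0"
    using assms(1-6) atE unfolding at_inf_def by auto
  have uC: "(g1 C)^2 + (g2 C)^2 = 1" unfolding g1_def g2_def by simp
  have uE: "(g1 C')^2 + (g2 C')^2 = 1" unfolding g1_def g2_def by simp
  have th1: "theta M N A B = ln (dt (g1 M) (g2 M) (g1 A) (g2 A) * dt (g1 N) (g2 N) (g1 B) (g2 B) /
      (dt (g1 N) (g2 N) (g1 A) (g2 A) * dt (g1 M) (g2 M) (g1 B) (g2 B)))"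
    unfolding theta_def cr_formula[OF assms(1) assms(1) assms(2) assms(3) assms(4)] g1_def g2_def ..
  have th2: "theta M N D C = ln (dt (g1 M) (g2 M) (g1 D) (g2 D) * dt (g1 N) (g2 N) (g1 C) (g2 C) /
      (dt (g1 N) (g2 N) (g1 D) (g2 D) * dt (g1 M) (g2 M) (g1 C) (g2 C)))"
    unfolding theta_def cr_formula[OF assms(1) assms(1) assms(2) assms(6) assms(5)] g1_def g2_def ..
  have th3: "theta M N B C' = ln (dt (g1 M) (g2 M) (g1 B) (g2 B) * dt (g1 N) (g2 N) (g1 C') (g2 C') /
      (dt (g1 N) (g2 N) (g1 B) (g2 B) * dt (g1 M) (g2 M) (g1 C') (g2 C')))"
    unfolding theta_def cr_formula[OF assms(1) assms(1) assms(2) assms(4) atE] g1_def g2_def ..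
  have cM: "cpos M M = 0" using cpos_self[OF assms(1)] .
  have DP: "0 < dt (g1 X) (g2 X) (g1 Y) (g2 Y)" if "cpos M X < cpos M Y" for X Y
    using dpos[OF that] unfolding g1_def g2_def .
  have DN: "dt (g1 X) (g2 X) (g1 Y) (g2 Y) < 0" if "cpos M Y < cpos M X" for X Y
    using DP[OF that] dt_anti[of "g1 X" "g2 X" "g1 Y" "g2 Y"] by simp
  have DM: "0 < dt (g1 M) (g2 M) (g1 X) (g2 X)" if "0 < cpos M X" for X
    using DP[of M X] that cM by simp
  have main: ?thesis
    if "\<sigma> = 1 \<or> \<sigma> = -1"
      "dt (g1 M) (g2 M) (g1 N) (g2 N) > 0" "dt (g1 M) (g2 M) (g1 A) (g2 A) > 0"
      "dt (g1 M) (g2 M) (g1 B) (g2 B) > 0" "dt (g1 M) (g2 M) (g1 C) (g2 C) > 0"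
      "dt (g1 M) (g2 M) (g1 D) (g2 D) > 0"
      "\<sigma> * dt (g1 C) (g2 C) (g1 D) (g2 D) > 0" "\<sigma> * dt (g1 C) (g2 C) (g1 N) (g2 N) > 0"
      "\<sigma> * dt (g1 C) (g2 C) (g1 A) (g2 A) > 0" "\<sigma> * dt (g1 C) (g2 C) (g1 B) (g2 B) > 0"
      "\<sigma> * dt (g1 D) (g2 D) (g1 N) (g2 N) > 0" "\<sigma> * dt (g1 D) (g2 D) (g1 A) (g2 A) > 0"
      "\<sigma> * dt (g1 D) (g2 D) (g1 B) (g2 B) > 0" "\<sigma> * dt (g1 N) (g2 N) (g1 A) (g2 A) > 0"
      "\<sigma> * dt (g1 N) (g2 N) (g1 B) (g2 B) > 0" "\<sigma> * dt (g1 A) (g2 A) (g1 B) (g2 B) > 0"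
    for \<sigma>
    by (rule core[OF rM rN rA rB rC rD rE lpos uC uE that th1 th2 th3 assms(10-18)])
  have cs1: "(0 < cpos M N \<and> cpos M N < cpos M A \<and> cpos M A < cpos M B) \<or>
             (0 < cpos M B \<and> cpos M B < cpos M A \<and> cpos M A < cpos M N)"
    using assms(8) unfolding consecutive4_def by simp
  have cs2: "(0 < cpos M N \<and> cpos M N < cpos M D \<and> cpos M D < cpos M C) \<or>
             (0 < cpos M C \<and> cpos M C < cpos M D \<and> cpos M D < cpos M N)"
    using assms(9) unfolding consecutive4_def by simp
  have "0 < cpos M N" using cs1 by auto
  hence mn: "dt (g1 M) (g2 M) (g1 N) (g2 N) \<noteq> 0" using DM by force
  note ex = excl[OF rM rN rA rB rC rD lpos(1-6) mn _ _ _ _ assms(7)]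
  show ?thesis
  proof (cases "cpos M N < cpos M A")
    case T1: True
    hence o1: "0 < cpos M N" "cpos M N < cpos M A" "cpos M A < cpos M B" using cs1 by auto
    show ?thesis
    proof (cases "cpos M N < cpos M D")
      case True
      hence o2: "cpos M N < cpos M D" "cpos M D < cpos M C" using cs2 by auto
      have False
        apply (rule ex[of 1])
        using o1 o2 by (auto intro!: mult_pos_pos DM DP simp: cM)
      thus ?thesis ..
    next
      case False
      hence o2: "0 < cpos M C" "cpos M C < cpos M D" "cpos M D < cpos M N" using cs2 by auto
      show ?thesis
        apply (rule main[of 1])
        using o1 o2 by (auto intro!: DM DP simp: cM)
    qed
  next
    case F1: False
    hence o1: "0 < cpos M B" "cpos M B < cpos M A" "cpos M A < cpos M N" using cs1 by auto
    show ?thesis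
    proof (cases "cpos M N < cpos M D")
      case True
      hence o2: "0 < cpos M N" "cpos M N < cpos M D" "cpos M D < cpos M C" using cs2 by auto
      show ?thesis
        apply (rule main[of "-1"])
        using o1 o2 by (auto intro!: DM DN simp: cM)
    next
      case False
      hence o2: "0 < cpos M C" "cpos M C < cpos M D" "cpos M D < cpos M N" using cs2 by auto
      have False
        apply (rule ex[of "-1"])
        using o1 o2 by (auto intro!: mult_pos_neg DM DN simp: cM)
      thus ?thesis ..
    qed
  qed
qed

end
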